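(* Let $n,k\ge s$ and let $\lambda$ be a partition with at most $k-s$ parts. Then $$R^{n-1}_{k-s}\circ\cdots\circ R^{s+1}_{k-s}\circ R^{s}_{k-s}\big(\Delta_\lambda(c_1,\ldots,c_s)\big)=\sum_{S\in\binom{[n]}{s}}\frac{\Delta_\lambda(\gamma_S)\cdot\prod_{i\in\bar S}\gamma_i^k}{\prod_{i\in\bar S}\prod_{j\in S}(\gamma_i-\gamma_j)},$$ where $\binom{[n]}{s}$ is the set of $s$-element subsets of $[n]=\{1,\ldots,n\}$, $\bar S=[n]\setminus S$, and the left side is regarded as a symmetric polynomial in $\gamma_1,\ldots,\gamma_n$ with $c_i$ the $i$-th elementary symmetric polynomial.
   Context: In $\mathbb{Z}[c_1,\ldots,c_m]$, $\Delta_\lambda(c_1,\ldots,c_m)=\det(c_{\lambda_i+j-i})_{i,j}$ with $c_0=1$, $c_r=0$ for $r<0$ or $r>m$. When $c_1,\ldots,c_m$ are identified with the elementary symmetric polynomials in variables $\gamma_1,\ldots,\gamma_m$, $\Delta_\lambda(\gamma_S)$ denotes $\Delta_\lambda(c_1,\ldots,c_s)$ expressed in $\gamma_1,\ldots,\gamma_s$ with $\gamma_i$, $i\in S$, substituted for them. The width of a monomial in the $c_i$ is its number of factors; the width of a polynomial is the maximum width of its terms. $P^m_w$ is the space of polynomials of width $\le w$ in $\mathbb{Z}[c_1,\ldots,c_m]$; every $p\in P^m_w$ has a unique expression $p=\sum_\lambda a_\lambda\Delta_\lambda(c_1,\ldots,c_m)$ over partitions $\lambda=(\lambda_1,\ldots,\lambda_w)$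 with at most $w$ nonzero parts (padded by zeros). The raising operator $R^m_w:P^m_w\to P^{m+1}_w$ is $\sum_\lambda a_\lambda\Delta_\lambda(c_1,\ldots,c_m)\mapsto\sum_\lambda a_\lambda\Delta_{(\lambda_1+1,\ldots,\lambda_w+1)}(c_1,\ldots,c_{m+1})$. When $n=s$ the composition on the left is the identity. *)

theory Defs
  imports Complex_Main "Jordan_Normal_Form.Determinant"
begin

text \<open>Polynomials in c_1, c_2, ... with integer coefficients are represented by the
polynomial functions they induce on complex points c :: nat => complex (c i is the
value of c_i); since the complex numbers are infinite, this representation is faithful.\<close>

type_synonym cpoly = "(nat \<Rightarrow> complex) \<Rightarrow> complex"

definition cval :: "nat \<Rightarrow> (nat \<Rightarrow> complex) \<Rightarrow> int \<Rightarrow> complex" where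
  "cval m c r = (if r = 0 then 1 else if r < 0 \<or> r > int m then 0 else c (nat r))"

text \<open>Delta_lambda(c_1,...,c_m) = det (c_{lambda_i + j - i})_{i,j}; lambda given as a list
(padded by zeros), matrix size = length of the list.\<close>
definition Delta :: "nat \<Rightarrow> nat list \<Rightarrow> cpoly" where
  "Delta m lam c = det (mat (length lam) (length lam)
      (\<lambda>(i,j). cval m c (int (lam ! i) + int j - int i)))"

definition box :: "nat \<Rightarrow> nat \<Rightarrow> nat list set" where
  "box w m = {l. length l = w \<and> sorted_wrt (\<ge>) l \<and> (\<forall>x\<in>set l. x \<le> m)}"

definition raise_op :: "nat \<Rightarrow> nat \<Rightarrow> cpoly \<Rightarrow> cpoly" where
  "raise_op m w p = (THE q. \<exists>a :: nat list \<Rightarrow> int.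
      p = (\<lambda>c. \<Sum>l\<in>box w m. of_int (a l) * Delta m l c) \<and>
      q = (\<lambda>c. \<Sum>l\<in>box w m. of_int (a l) * Delta (Suc m) (map Suc l) c))"

fun raise_iter :: "nat \<Rightarrow> nat \<Rightarrow> nat \<Rightarrow> cpoly \<Rightarrow> cpoly" where
  "raise_iter w s 0 p = p"
| "raise_iter w s (Suc t) p = raise_op (s + t) w (raise_iter w s t p)"

definition esym :: "(nat \<Rightarrow> complex) \<Rightarrow> nat set \<Rightarrow> nat \<Rightarrow> complex" where
  "esym \<gamma> S i = (\<Sum>T | T \<subseteq> S \<and> card T = i. \<Prod>j\<in>T. \<gamma> j)"

end

theory Submission
  imports Defs "HOL-Computational_Algebra.Fundamental_Theorem_Algebra"
begin


lemma esym_0: "finite B \<Longrightarrow> esym g B 0 = 1"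
proof -
  assume f: "finite B"
  have "{T. T \<subseteq> B \<and> card T = 0} = {{}}" using f by (auto dest: finite_subset)
  thus ?thesis unfolding esym_def by (simp only:) simp
qed

lemma esym_big: "finite B \<Longrightarrow> card B < r \<Longrightarrow> esym g B r = 0"
proof -
  assume f: "finite B" "card B < r"
  have "{T. T \<subseteq> B \<and> card T = r} = {}"
  proof (rule ccontr)
    assume "{T. T \<subseteq> B \<and> card T = r} \<noteq> {}"
    then obtain T where T: "T \<subseteq> B" "card T = r" by blast
    have "card T \<le> card B" by (rule card_mono[OF f(1) T(1)])
    then show False using T f by simp
  qed
  thus ?thesis unfolding esym_def by (simp only:) simp
qed

lemma esym_pascal:
  assumes f: "finite B" and z: "z \<in> B"
  shows "esym g B (Suc r) = esym g (B - {z}) (Suc r) + g z * esym g (B - {z}) r"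
proof -
  let ?C = "B - {z}"
  have fC: "finite ?C" using f by simp
  have eq: "{T. T \<subseteq> B \<and> card T = Suc r} =
     {T. T \<subseteq> ?C \<and> card T = Suc r} \<union> insert z ` {T. T \<subseteq> ?C \<and> card T = r}"
  proof (intro equalityI subsetI)
    fix T assume T: "T \<in> {T. T \<subseteq> B \<and> card T = Suc r}"
    show "T \<in> {T. T \<subseteq> ?C \<and> card T = Suc r} \<union> insert z ` {T. T \<subseteq> ?C \<and> card T = r}"
    proof (cases "z \<in> T")
      case True
      have fT: "finite T" using T f finite_subset by auto
      have "T = insert z (T - {z})" using True by auto
      moreover have "card (T - {z}) = r" using T True fT by simp
      ultimately show ?thesis using T by blast
    next
      case False then show ?thesis using T by auto
    qed
  next
    fix T assume "T \<in> {T. T \<subseteq> ?C \<and> card T = Suc r} \<union> insert z ` {T. T \<subseteq> ?C \<and> card T = r}"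
    then show "T \<in> {T. T \<subseteq> B \<and> card T = Suc r}"
    proof
      assume "T \<in> {T. T \<subseteq> ?C \<and> card T = Suc r}" thus ?thesis by auto
    next
      assume "T \<in> insert z ` {T. T \<subseteq> ?C \<and> card T = r}"
      then obtain U where U: "U \<subseteq> ?C" "card U = r" "T = insert z U" by auto
      have "finite U" "z \<notin> U" using U fC finite_subset by auto
      thus ?thesis using U z by auto
    qed
  qed
  have fin1: "finite {T. T \<subseteq> ?C \<and> card T = Suc r}" using fC by auto
  have fin2: "finite (insert z ` {T. T \<subseteq> ?C \<and> card T = r})" using fC by auto
  have disj: "{T. T \<subseteq> ?C \<and> card T = Suc r} \<inter> insert z ` {T. T \<subseteq> ?C \<and> card T = r} = {}" by auto
  have inj: "inj_on (insert z) {T. T \<subseteq> ?C \<and> card T = r}"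
    by (rule inj_onI) (metis Diff_insert_absorb insert_absorb subsetD Diff_iff singletonI mem_Collect_eq)
  have "esym g B (Suc r) = esym g ?C (Suc r)
        + (\<Sum>T\<in>insert z ` {T. T \<subseteq> ?C \<and> card T = r}. \<Prod>j\<in>T. g j)"
    unfolding esym_def eq by (rule sum.union_disjoint[OF fin1 fin2 disj])
  also have "(\<Sum>T\<in>insert z ` {T. T \<subseteq> ?C \<and> card T = r}. \<Prod>j\<in>T. g j)
      = (\<Sum>T\<in>{T. T \<subseteq> ?C \<and> card T = r}. g z * (\<Prod>j\<in>T. g j))"
  proof -
    have "(\<Sum>T\<in>insert z ` {T. T \<subseteq> ?C \<and> card T = r}. \<Prod>j\<in>T. g j)
       = (\<Sum>T\<in>{T. T \<subseteq> ?C \<and> card T = r}. \<Prod>j\<in>insert z T. g j)"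
      by (simp add: sum.reindex[OF inj])
    also have "\<dots> = (\<Sum>T\<in>{T. T \<subseteq> ?C \<and> card T = r}. g z * (\<Prod>j\<in>T. g j))"
    proof (rule sum.cong)
      fix T assume T: "T \<in> {T. T \<subseteq> ?C \<and> card T = r}"
      have "finite T" "z \<notin> T" using T fC finite_subset by auto
      thus "(\<Prod>j\<in>insert z T. g j) = g z * (\<Prod>j\<in>T. g j)" by simp
    qed simp
    finally show ?thesis .
  qed
  also have "\<dots> = g z * esym g ?C r" by (simp only: esym_def sum_distrib_left)
  finally show ?thesis .
qed

definition EE :: "(nat \<Rightarrow> complex) \<Rightarrow> nat set \<Rightarrow> int \<Rightarrow> complex" where
  "EE g B r = (if r < 0 then 0 else esym g B (nat r))"

lemma cval_esym: "finite B \<Longrightarrow> cval (card B) (esym g B) r = EE g B r"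
  by (auto simp: cval_def EE_def esym_0 esym_big)

lemma EE_pascal:
  assumes "finite B" "z \<in> B"
  shows "EE g B r = EE g (B - {z}) r + g z * EE g (B - {z}) (r - 1)"
proof -
  consider "r < 0" | "r = 0" | "r > 0" by linarith
  then show ?thesis
  proof cases
    case 3
    then obtain q where q: "r = int (Suc q)" by (metis gr0_conv_Suc pos_int_cases of_nat_0_less_iff)
    have n: "nat r = Suc q" "nat (r - 1) = q" using q by auto
    have "EE g B r = esym g B (Suc q)" "EE g (B - {z}) r = esym g (B - {z}) (Suc q)"
      "EE g (B - {z}) (r - 1) = esym g (B - {z}) q" unfolding EE_def using 3 n by auto
    then show ?thesis using esym_pascal[OF assms, of g q] by simp
  qed (use assms in \<open>auto simp: EE_def esym_0\<close>)
qed

lemma esym_up: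
  assumes f: "finite B" and z: "z \<in> B"
  shows "g z ^ K * esym g (B - {z}) R =
     (\<Sum>q=1..K. (-1)^(q+1) * g z ^ (K - q) * esym g B (R + q)) + (-1)^K * esym g (B - {z}) (R + K)"
proof (induction K)
  case 0 then show ?case by simp
next
  case (Suc K)
  have P: "g z * esym g (B - {z}) (R + K) = esym g B (R + Suc K) - esym g (B - {z}) (R + Suc K)"
    using esym_pascal[OF f z, of g "R + K"] by simp
  have "g z ^ Suc K * esym g (B - {z}) R = g z * (g z ^ K * esym g (B - {z}) R)" by simp
  also have "\<dots> = (\<Sum>q=1..K. (-1)^(q+1) * g z ^ (Suc K - q) * esym g B (R + q))
      + (-1)^K * (g z * esym g (B - {z}) (R + K))"
    unfolding Suc.IH by (simp add: algebra_simps sum_distrib_left Suc_diff_le)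
  also have "\<dots> = (\<Sum>q=1..Suc K. (-1)^(q+1) * g z ^ (Suc K - q) * esym g B (R + q))
      + (-1)^(Suc K) * esym g (B - {z}) (R + Suc K)"
    unfolding P by (simp add: algebra_simps)
  finally show ?case .
qed



definition SS :: "(nat \<Rightarrow> complex) \<Rightarrow> nat set \<Rightarrow> nat \<Rightarrow> complex" where
  "SS g A p = (\<Sum>i\<in>A. g i ^ p / (\<Prod>j\<in>A - {i}. g i - g j))"

lemma aux_div: "x ^ Suc p / D - c * (x ^ p / D) = x ^ p * (x - c) / (D::complex)"
  by (cases "D = 0") (simp_all add: field_simps)

lemma SS_shift:
  assumes f: "finite A" and z: "z \<in> A" and inj: "inj_on g A"
  shows "SS g A (Suc p) - g z * SS g A p = SS g (A - {z}) p"
proof -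
  have "SS g A (Suc p) - g z * SS g A p = (\<Sum>i\<in>A. g i ^ p * (g i - g z) / (\<Prod>j\<in>A - {i}. g i - g j))"
    unfolding SS_def sum_distrib_left sum_subtractf[symmetric] aux_div ..
  also have "\<dots> = (\<Sum>i\<in>A - {z}. g i ^ p * (g i - g z) / (\<Prod>j\<in>A - {i}. g i - g j))"
    by (subst sum.remove[OF f z]) simp
  also have "\<dots> = SS g (A - {z}) p" unfolding SS_def
  proof (rule sum.cong, simp)
    fix i assume i: "i \<in> A - {z}"
    have nz: "g i - g z \<noteq> 0" using i z inj by (auto dest: inj_onD)
    have e: "A - {i} - {z} = A - {z} - {i}" by auto
    have "(\<Prod>j\<in>A - {i}. g i - g j) = (g i - g z) * (\<Prod>j\<in>A - {i} - {z}. g i - g j)"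
      using f i z by (subst prod.remove[of _ z]) auto
    then have P: "(\<Prod>j\<in>A - {i}. g i - g j) = (\<Prod>j\<in>A - {z} - {i}. g i - g j) * (g i - g z)"
      unfolding e by (simp only: mult.commute)
    show "g i ^ p * (g i - g z) / (\<Prod>j\<in>A - {i}. g i - g j) = g i ^ p / (\<Prod>j\<in>A - {z} - {i}. g i - g j)"
      unfolding P by (rule nonzero_mult_divide_mult_cancel_right[OF nz])
  qed
  finally show ?thesis .
qed

lemma lagrange:
  "finite A \<Longrightarrow> card A = Suc N \<Longrightarrow> inj_on g A \<Longrightarrow> (\<forall>p<N. SS g A p = 0) \<and> SS g A N = 1"
proof (induction N arbitrary: A)
  case 0
  then obtain z where "A = {z}" by (auto simp: card_Suc_eq)
  then show ?case by (simp add: SS_def)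
next
  case (Suc N)
  from Suc.prems have "A \<noteq> {}" by auto
  then obtain z where z: "z \<in> A" by blast
  have "card (A - {z}) = Suc N" using Suc.prems z by simp
  then have "A - {z} \<noteq> {}" by (cases "A - {z} = {}") simp_all
  then obtain y where y: "y \<in> A - {z}" by blast
  have zy: "z \<in> A" "y \<in> A" "z \<noteq> y" using z y by auto
  have injz: "inj_on g (A - {z})" using Suc.prems(3) by (rule inj_on_subset) blast
  have injy: "inj_on g (A - {y})" using Suc.prems(3) by (rule inj_on_subset) blast
  have cz: "card (A - {z}) = Suc N" using Suc.prems zy by simp
  have cy: "card (A - {y}) = Suc N" using Suc.prems zy by simp
  have fz: "finite (A - {z})" "finite (A - {y})" using Suc.prems by auto
  have IHz: "(\<forall>p<N. SS g (A - {z}) p = 0) \<and> SS g (A - {z}) N = 1"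
    by (rule Suc.IH[OF fz(1) cz injz])
  have IHy: "(\<forall>p<N. SS g (A - {y}) p = 0) \<and> SS g (A - {y}) N = 1"
    by (rule Suc.IH[OF fz(2) cy injy])
  have ne: "g y - g z \<noteq> 0" using zy Suc.prems by (auto dest: inj_onD)
  have small: "SS g A p = 0" if "p \<le> N" for p
  proof -
    have "(g y - g z) * SS g A p = SS g (A - {z}) p - SS g (A - {y}) p"
      using SS_shift[OF Suc.prems(1) zy(1) Suc.prems(3), of p] SS_shift[OF Suc.prems(1) zy(2) Suc.prems(3), of p]
      by (simp add: algebra_simps)
    also have "\<dots> = 0"
    proof (cases "p = N")
      case True then show ?thesis using IHz IHy by simp
    next
      case False then have "p < N" using that by simp
      then show ?thesis using IHz IHy by simp
    qed
    finally show ?thesis using ne by simp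
  qed
  have "SS g A (Suc N) = g z * SS g A N + SS g (A - {z}) N"
    using SS_shift[OF Suc.prems(1) zy(1) Suc.prems(3), of N] by (simp add: algebra_simps)
  then have "SS g A (Suc N) = 1" using small[of N] IHz by simp
  moreover have "\<forall>p<Suc N. SS g A p = 0" using small less_Suc_eq_le by blast
  ultimately show ?case by blast
qed



definition Dn :: "(nat \<Rightarrow> complex) \<Rightarrow> nat set \<Rightarrow> nat list \<Rightarrow> complex" where
  "Dn g B l = det (mat (length l) (length l) (\<lambda>(i,j). EE g B (int (l ! i) + int j - int i)))"

lemma Delta_esym: "finite B \<Longrightarrow> Delta (card B) l (esym g B) = Dn g B l"
  unfolding Delta_def Dn_def by (simp add: cval_esym)

lemma vanish:
  assumes f: "finite A" and c: "card A = Suc m" and inj: "inj_on g A" and R: "1 \<le> R"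
  shows "(\<Sum>i\<in>A. g i ^ m * esym g (A - {i}) R / (\<Prod>j\<in>A - {i}. g i - g j)) = 0"
proof (cases "m < R")
  case True
  have "esym g (A - {i}) R = 0" if "i \<in> A" for i
    using that f c True by (intro esym_big) auto
  then show ?thesis by simp
next
  case False
  define K where "K = Suc m - R"
  have K: "R - 1 + K = m" "R + K = Suc m" using False R unfolding K_def by auto
  have key: "g i ^ m * esym g (A - {i}) R = (\<Sum>q=1..K. (-1)^(q+1) * esym g A (R + q) * g i ^ (m - q))"
    if i: "i \<in> A" for i
  proof -
    have z: "esym g (A - {i}) (R + K) = 0" using f c i K by (intro esym_big) auto
    have pm: "g i ^ m = g i ^ (R - 1) * g i ^ K" using K(1) by (metis power_add)
    have "g i ^ m * esym g (A - {i}) R = g i ^ (R - 1) * (g i ^ K * esym g (A - {i}) R)"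
      unfolding pm by (simp only: mult.assoc)
    also have "\<dots> = g i ^ (R - 1) * (\<Sum>q=1..K. (-1)^(q+1) * g i ^ (K - q) * esym g A (R + q))"
      unfolding esym_up[OF f i] z by simp
    also have "\<dots> = (\<Sum>q=1..K. (-1)^(q+1) * esym g A (R + q) * g i ^ (m - q))"
      unfolding sum_distrib_left
    proof (rule sum.cong, simp)
      fix q assume q: "q \<in> {1..K}"
      have "R - 1 + (K - q) = m - q" using q K by auto
      then have "g i ^ (R - 1) * g i ^ (K - q) = g i ^ (m - q)"
        by (metis power_add)
      then show "g i ^ (R - 1) * ((-1)^(q+1) * g i ^ (K - q) * esym g A (R + q)) =
            (-1)^(q+1) * esym g A (R + q) * g i ^ (m - q)"
        by (simp add: algebra_simps)
    qed
    finally show ?thesis .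
  qed
  have "(\<Sum>i\<in>A. g i ^ m * esym g (A - {i}) R / (\<Prod>j\<in>A - {i}. g i - g j))
      = (\<Sum>i\<in>A. \<Sum>q=1..K. (-1)^(q+1) * esym g A (R + q) * (g i ^ (m - q) / (\<Prod>j\<in>A - {i}. g i - g j)))"
    by (rule sum.cong) (simp_all add: key sum_divide_distrib)
  also have "\<dots> = (\<Sum>q=1..K. (-1)^(q+1) * esym g A (R + q) * SS g A (m - q))"
    unfolding SS_def sum_distrib_left by (rule sum.swap)
  also have "\<dots> = 0"
  proof (rule sum.neutral, rule ballI)
    fix q assume q: "q \<in> {1..K}"
    have "m - q < m" using q K by auto
    then have "SS g A (m - q) = 0" using lagrange[OF f c inj] by blast
    then show "(-1)^(q+1) * esym g A (R + q) * SS g A (m - q) = 0" by simp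
  qed
  finally show ?thesis .
qed



lemma inner:
  assumes f: "finite A" and c: "card A = Suc m" and inj: "inj_on g A" and x: "0 \<le> x"
  shows "(\<Sum>i\<in>A. g i ^ Suc m * EE g (A - {i}) x / (\<Prod>j\<in>A - {i}. g i - g j)) = EE g A (x + 1)"
proof -
  obtain R where R: "x = int R" using x by (metis nonneg_eq_int)
  have t: "g i ^ Suc m * EE g (A - {i}) x / (\<Prod>j\<in>A - {i}. g i - g j)
      = esym g A (Suc R) * (g i ^ m / (\<Prod>j\<in>A - {i}. g i - g j))
        - g i ^ m * esym g (A - {i}) (Suc R) / (\<Prod>j\<in>A - {i}. g i - g j)" if i: "i \<in> A" for i
  proof -
    have P: "g i * esym g (A - {i}) R = esym g A (Suc R) - esym g (A - {i}) (Suc R)"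
      using esym_pascal[OF f i, of g R] by simp
    have "g i ^ Suc m * EE g (A - {i}) x = g i ^ m * (g i * esym g (A - {i}) R)"
      unfolding R EE_def by simp
    also have "\<dots> = esym g A (Suc R) * g i ^ m - g i ^ m * esym g (A - {i}) (Suc R)"
      unfolding P by (simp add: algebra_simps)
    finally show ?thesis by (simp add: diff_divide_distrib)
  qed
  have "(\<Sum>i\<in>A. g i ^ Suc m * EE g (A - {i}) x / (\<Prod>j\<in>A - {i}. g i - g j))
     = esym g A (Suc R) * SS g A m - (\<Sum>i\<in>A. g i ^ m * esym g (A - {i}) (Suc R) / (\<Prod>j\<in>A - {i}. g i - g j))"
    unfolding SS_def sum_distrib_left sum_subtractf[symmetric] by (rule sum.cong[OF refl t])
  also have "\<dots> = esym g A (Suc R)"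
    using lagrange[OF f c inj] vanish[OF f c inj, of "Suc R"] by simp
  also have "\<dots> = EE g A (x + 1)"
  proof -
    have e: "x + 1 = int (Suc R)" unfolding R by simp
    show ?thesis unfolding e EE_def nat_int by simp
  qed
  finally show ?thesis .
qed

lemma prod_list_upt: "prod_list (map f [0..<n]) = (\<Prod>i<n. f i)"
  by (induction n) auto

lemma Dn_nil: "Dn g B [] = 1"
  unfolding Dn_def by (rule det_dim_zero) simp



lemma raise_step:
  assumes f: "finite A" and c: "card A = Suc m" and inj: "inj_on g A"
  shows "Dn g A (map Suc l) =
     (\<Sum>i\<in>A. g i ^ (length l + m) / (\<Prod>j\<in>A - {i}. g i - g j) * Dn g (A - {i}) l)"
proof (cases "length l")
  case 0
  then have "l = []" by simp
  then show ?thesis using lagrange[OF f c inj] by (simp add: Dn_nil SS_def)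
next
  case (Suc w')
  define w where "w = length l"
  have w: "w = Suc w'" using Suc w_def by simp
  define r where "r a = int (l ! a) - int a" for a
  define C where "C = mat w w (\<lambda>(a,b). EE g A (r a + int b + 1))"
  define M where "M i = mat w w (\<lambda>(a,b). EE g (A - {i}) (r a + int b))" for i
  define U where "U i = mat w w (\<lambda>(k,b). (if k = b then (if b < w' then g i else 1) else 0)
                                + (if k = Suc b then 1 else 0))" for i
  define N where "N i = mat w w (\<lambda>(a,b). if b < w' then EE g A (r a + int b + 1)
                                           else EE g (A - {i}) (r a + int b))" for i
  have DC: "Dn g A (map Suc l) = det C"
    unfolding Dn_def C_def w_def
    by (rule arg_cong[where f = det], rule eq_matI) (auto simp: r_def intro!: arg_cong[where f = "EE g A"])
  have DM: "Dn g (A - {i}) l = det (M i)" for i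
    unfolding Dn_def M_def w_def
    by (rule arg_cong[where f = det], rule eq_matI) (auto simp: r_def intro!: arg_cong[where f = "EE g (A - {i})"])
  have carr: "C \<in> carrier_mat w w" "M i \<in> carrier_mat w w" "U i \<in> carrier_mat w w"
      "N i \<in> carrier_mat w w" for i
    unfolding C_def M_def U_def N_def by auto
  have detU: "det (U i) = g i ^ w'" for i
  proof -
    have "det (U i) = prod_list (diag_mat (U i))"
      by (rule det_lower_triangular[OF _ carr(3)]) (auto simp: U_def)
    also have "\<dots> = (\<Prod>b<w. if b < w' then g i else 1)"
      unfolding diag_mat_def prod_list_upt using carr(3)[of i] by (simp add: U_def)
    also have "\<dots> = (\<Prod>b<w'. g i)" unfolding w by (simp add: lessThan_Suc)
    finally show ?thesis by simp
  qed
  have MU: "M i * U i = N i" if i: "i \<in> A" for i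
  proof (rule eq_matI)
    fix a b assume a: "a < dim_row (N i)" and b: "b < dim_col (N i)"
    then have a: "a < w" and b: "b < w" by (auto simp: N_def)
    have "(M i * U i) $$ (a, b) = (\<Sum>k\<in>{0..<w}. M i $$ (a, k) * U i $$ (k, b))"
      using a b by (simp add: scalar_prod_def M_def U_def)
    also have "\<dots> = (\<Sum>k\<in>{0..<w}. (if k = b then M i $$ (a, k) * (if b < w' then g i else 1) else 0)
                 + (if k = Suc b then M i $$ (a, k) else 0))"
      by (rule sum.cong) (use b in \<open>auto simp: U_def\<close>)
    also have "\<dots> = M i $$ (a, b) * (if b < w' then g i else 1) + (if Suc b < w then M i $$ (a, Suc b) else 0)"
      using b by (simp add: sum.distrib)
    also have "\<dots> = N i $$ (a, b)"
    proof (cases "b < w'")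
      case True
      then have sb: "Suc b < w" using w by simp
      have "EE g A (r a + int b + 1) = EE g (A - {i}) (r a + int b + 1) + g i * EE g (A - {i}) (r a + int b)"
        using EE_pascal[OF f i, of g "r a + int b + 1"] by simp
      then show ?thesis using True sb a b by (simp add: M_def N_def algebra_simps)
    next
      case False
      then have "b = w'" using b w by simp
      then show ?thesis using False a b w by (simp add: M_def N_def)
    qed
    finally show "(M i * U i) $$ (a, b) = N i $$ (a, b)" .
  qed (auto simp: N_def M_def U_def)
  have detN: "det (N i) = det (M i) * g i ^ w'" if "i \<in> A" for i
    using det_mult[OF carr(2) carr(3), of i i] MU[OF that] detU by simp
  have wl: "w' < w" using w by simp
  have cof: "cofactor (N i) a w' = cofactor C a w'" for i a
    unfolding cofactor_def
  proof -
    have "mat_delete (N i) a w' = mat_delete C a w'"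
    proof (rule eq_matI)
      fix x y assume "x < dim_row (mat_delete C a w')" "y < dim_col (mat_delete C a w')"
      then have x: "x < w'" and y: "y < w'" using carr(1) w by auto
      show "mat_delete (N i) a w' $$ (x, y) = mat_delete C a w' $$ (x, y)"
        unfolding mat_delete_def using x y w by (simp add: N_def C_def)
    qed (auto simp: N_def C_def)
    then show "(- 1) ^ (a + w') * det (mat_delete (N i) a w') = (- 1) ^ (a + w') * det (mat_delete C a w')"
      by simp
  qed
  have lapN: "det (N i) = (\<Sum>a<w. EE g (A - {i}) (r a + int w') * cofactor C a w')" for i
    unfolding laplace_expansion_column[OF carr(4) wl, of i] cof
    by (rule sum.cong) (use wl in \<open>auto simp: N_def\<close>)
  have lapC: "det C = (\<Sum>a<w. EE g A (r a + int w' + 1) * cofactor C a w')"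
    unfolding laplace_expansion_column[OF carr(1) wl]
    by (rule sum.cong) (use wl in \<open>auto simp: C_def\<close>)
  have "(\<Sum>i\<in>A. g i ^ (length l + m) / (\<Prod>j\<in>A - {i}. g i - g j) * Dn g (A - {i}) l)
      = (\<Sum>i\<in>A. g i ^ Suc m / (\<Prod>j\<in>A - {i}. g i - g j) * det (N i))"
  proof (rule sum.cong[OF refl])
    fix i assume i: "i \<in> A"
    have "length l + m = Suc m + w'" using Suc by simp
    then have "g i ^ (length l + m) = g i ^ Suc m * g i ^ w'" by (metis power_add)
    then show "g i ^ (length l + m) / (\<Prod>j\<in>A - {i}. g i - g j) * Dn g (A - {i}) l
        = g i ^ Suc m / (\<Prod>j\<in>A - {i}. g i - g j) * det (N i)"
      unfolding DM detN[OF i] by (simp add: algebra_simps)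
  qed
  also have "\<dots> = (\<Sum>i\<in>A. \<Sum>a<w. cofactor C a w' *
          (g i ^ Suc m * EE g (A - {i}) (r a + int w') / (\<Prod>j\<in>A - {i}. g i - g j)))"
    unfolding lapN sum_distrib_left by (rule sum.cong[OF refl], rule sum.cong[OF refl]) (simp add: algebra_simps)
  also have "\<dots> = (\<Sum>a<w. cofactor C a w' *
          (\<Sum>i\<in>A. g i ^ Suc m * EE g (A - {i}) (r a + int w') / (\<Prod>j\<in>A - {i}. g i - g j)))"
    unfolding sum_distrib_left by (rule sum.swap)
  also have "\<dots> = (\<Sum>a<w. cofactor C a w' * EE g A (r a + int w' + 1))"
  proof (rule sum.cong[OF refl])
    fix a assume "a \<in> {..<w}"
    then have "0 \<le> r a + int w'" using w by (simp add: r_def)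
    then show "cofactor C a w' * (\<Sum>i\<in>A. g i ^ Suc m * EE g (A - {i}) (r a + int w') / (\<Prod>j\<in>A - {i}. g i - g j))
        = cofactor C a w' * EE g A (r a + int w' + 1)"
      using inner[OF f c inj] by simp
  qed
  also have "\<dots> = det C" unfolding lapC by (simp add: mult.commute)
  finally show ?thesis unfolding DC ..
qed



lemma prod_diff_nz:
  assumes "finite X" "inj_on g Y" "i \<in> Y" "X \<subseteq> Y" "i \<notin> X"
  shows "(\<Prod>j\<in>X. g i - g j) \<noteq> (0::complex)"
  using assms by (auto simp: prod_zero_iff dest: inj_onD)

lemma key_alg:
  fixes D Z gi X Y W :: complex
  assumes "X \<noteq> 0" "Y \<noteq> 0" "W \<noteq> 0"
  shows "gi ^ (k + t) / (X * Y) * (D * Z / W) = D * (gi ^ k * Z / (X * W)) * (gi ^ t / Y)"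
  using assms by (simp add: power_add field_simps)

lemma main_formula:
  assumes k: "k = length lam + s"
  shows "finite A \<Longrightarrow> card A = s + t \<Longrightarrow> inj_on g A \<Longrightarrow>
    Dn g A (map (\<lambda>x. x + t) lam) =
    (\<Sum>S | S \<subseteq> A \<and> card S = s. Dn g S lam * (\<Prod>i\<in>A - S. g i ^ k) / (\<Prod>i\<in>A - S. \<Prod>j\<in>S. g i - g j))"
proof (induction t arbitrary: A)
  case 0
  have "{S. S \<subseteq> A \<and> card S = s} = {A}"
    using 0 by (auto dest: card_subset_eq)
  then show ?case by simp
next
  case (Suc t)
  note f = Suc.prems(1) and c = Suc.prems(2) and inj = Suc.prems(3)
  define Sets where "Sets = {S. S \<subseteq> A \<and> card S = s}"
  define Q where "Q S = (\<Prod>i\<in>A - S. g i ^ k) / (\<Prod>i\<in>A - S. \<Prod>j\<in>S. g i - g j)" for S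
  define P where "P i = (\<Prod>j\<in>A - {i}. g i - g j)" for i
  have finSets: "finite Sets" unfolding Sets_def using f by auto
  have c': "card A = Suc (s + t)" using c by simp
  have e1: "map (\<lambda>x. x + Suc t) lam = map Suc (map (\<lambda>x. x + t) lam)" by simp
  have IH: "Dn g (A - {i}) (map (\<lambda>x. x + t) lam) =
      (\<Sum>S\<in>{S\<in>Sets. i \<notin> S}. Dn g S lam * (\<Prod>l\<in>A - {i} - S. g l ^ k) / (\<Prod>l\<in>A - {i} - S. \<Prod>j\<in>S. g l - g j))"
    if i: "i \<in> A" for i
  proof -
    have "{S. S \<subseteq> A - {i} \<and> card S = s} = {S\<in>Sets. i \<notin> S}" unfolding Sets_def by auto
    moreover have "Dn g (A - {i}) (map (\<lambda>x. x + t) lam) =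
      (\<Sum>S | S \<subseteq> A - {i} \<and> card S = s. Dn g S lam * (\<Prod>l\<in>A - {i} - S. g l ^ k) / (\<Prod>l\<in>A - {i} - S. \<Prod>j\<in>S. g l - g j))"
      using Suc.IH[of "A - {i}"] f c i inj by (simp add: inj_on_diff)
    ultimately show ?thesis by simp
  qed
  have "Dn g A (map (\<lambda>x. x + Suc t) lam) =
      (\<Sum>i\<in>A. g i ^ (k + t) / P i * Dn g (A - {i}) (map (\<lambda>x. x + t) lam))"
    unfolding e1 raise_step[OF f c' inj] P_def using k by (simp add: add.commute add.left_commute)
  also have "\<dots> = (\<Sum>i\<in>A. \<Sum>S\<in>{S\<in>Sets. i \<notin> S}.
        g i ^ (k + t) / P i * (Dn g S lam * (\<Prod>l\<in>A - {i} - S. g l ^ k) / (\<Prod>l\<in>A - {i} - S. \<Prod>j\<in>S. g l - g j)))"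
    by (rule sum.cong[OF refl]) (simp add: IH sum_distrib_left)
  also have "\<dots> = (\<Sum>S\<in>Sets. \<Sum>i\<in>{i\<in>A. i \<notin> S}.
        g i ^ (k + t) / P i * (Dn g S lam * (\<Prod>l\<in>A - {i} - S. g l ^ k) / (\<Prod>l\<in>A - {i} - S. \<Prod>j\<in>S. g l - g j)))"
    by (rule sum.swap_restrict[OF f finSets])
  also have "\<dots> = (\<Sum>S\<in>Sets. Dn g S lam * Q S * SS g (A - S) t)"
  proof (rule sum.cong[OF refl])
    fix S assume S: "S \<in> Sets"
    have fS: "finite S" using S f unfolding Sets_def by (auto dest: finite_subset)
    show "(\<Sum>i\<in>{i\<in>A. i \<notin> S}.
        g i ^ (k + t) / P i * (Dn g S lam * (\<Prod>l\<in>A - {i} - S. g l ^ k) / (\<Prod>l\<in>A - {i} - S. \<Prod>j\<in>S. g l - g j)))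
        = Dn g S lam * Q S * SS g (A - S) t"
      unfolding SS_def sum_distrib_left
    proof (rule sum.cong)
      show "{i\<in>A. i \<notin> S} = A - S" by auto
    next
      fix i assume i: "i \<in> A - S"
      define T' where "T' = A - S - {i}"
      have e2: "A - {i} - S = T'" unfolding T'_def by auto
      have fT': "finite T'" unfolding T'_def using f by auto
      have iT': "i \<notin> T'" unfolding T'_def by auto
      have AS: "A - S = insert i T'" unfolding T'_def using i by auto
      have Ai: "A - {i} = S \<union> T'" unfolding T'_def using S i unfolding Sets_def by auto
      have disj: "S \<inter> T' = {}" unfolding T'_def by auto
      have p1: "(\<Prod>l\<in>A - S. g l ^ k) = g i ^ k * (\<Prod>l\<in>T'. g l ^ k)"
        unfolding AS using fT' iT' by simp
      have p2: "(\<Prod>l\<in>A - S. \<Prod>j\<in>S. g l - g j) = (\<Prod>j\<in>S. g i - g j) * (\<Prod>l\<in>T'. \<Prod>j\<in>S. g l - g j)"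
        unfolding AS using fT' iT' by simp
      have p3: "P i = (\<Prod>j\<in>S. g i - g j) * (\<Prod>j\<in>T'. g i - g j)"
        unfolding P_def Ai using fS fT' disj by (simp add: prod.union_disjoint)
      have nzX: "(\<Prod>j\<in>S. g i - g j) \<noteq> 0"
        using S i fS inj unfolding Sets_def by (intro prod_diff_nz[where Y = A]) auto
      have nzY: "(\<Prod>j\<in>T'. g i - g j) \<noteq> 0"
        using i fT' inj iT' unfolding T'_def by (intro prod_diff_nz[where Y = A]) auto
      have nzW: "(\<Prod>l\<in>T'. \<Prod>j\<in>S. g l - g j) \<noteq> 0"
      proof -
        have "(\<Prod>j\<in>S. g l - g j) \<noteq> 0" if l: "l \<in> T'" for l
          using S l fS inj unfolding Sets_def T'_def by (intro prod_diff_nz[where Y = A]) auto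
        then show ?thesis using fT' by (simp add: prod_zero_iff)
      qed
      have e3: "A - S - {i} = T'" unfolding T'_def ..
      show "g i ^ (k + t) / P i * (Dn g S lam * (\<Prod>l\<in>A - {i} - S. g l ^ k) / (\<Prod>l\<in>A - {i} - S. \<Prod>j\<in>S. g l - g j))
          = Dn g S lam * Q S * (g i ^ t / (\<Prod>j\<in>A - S - {i}. g i - g j))"
        unfolding e2 e3 p3 Q_def p1 p2 by (rule key_alg[OF nzX nzY nzW])
    qed
  qed
  also have "\<dots> = (\<Sum>S\<in>Sets. Dn g S lam * Q S)"
  proof (rule sum.cong[OF refl])
    fix S assume S: "S \<in> Sets"
    have fS: "finite S" using S f unfolding Sets_def by (auto dest: finite_subset)
    have "card (A - S) = Suc t" using S f c fS unfolding Sets_def by (simp add: card_Diff_subset)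
    then have "SS g (A - S) t = 1" using lagrange[of "A - S" t g] f inj by (auto intro: inj_on_diff)
    then show "Dn g S lam * Q S * SS g (A - S) t = Dn g S lam * Q S" by simp
  qed
  finally show ?case unfolding Sets_def Q_def by (simp add: mult.assoc times_divide_eq_right)
qed



definition pf :: "(complex \<Rightarrow> complex) \<Rightarrow> bool" where
  "pf f \<longleftrightarrow> (\<exists>p. \<forall>x. f x = poly p x)"

lemma pf_const: "pf (\<lambda>x. c)"
  unfolding pf_def by (rule exI[of _ "[:c:]"]) simp

lemma pf_id: "pf (\<lambda>x. x)"
  unfolding pf_def by (rule exI[of _ "[:0, 1:]"]) simp

lemma pf_add: "pf f \<Longrightarrow> pf g \<Longrightarrow> pf (\<lambda>x. f x + g x)"
  unfolding pf_def by (metis poly_add)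

lemma pf_mult: "pf f \<Longrightarrow> pf g \<Longrightarrow> pf (\<lambda>x. f x * g x)"
  unfolding pf_def by (metis poly_mult)

lemma pf_sum_fin: "finite I \<Longrightarrow> (\<forall>i\<in>I. pf (f i)) \<longrightarrow> pf (\<lambda>x. \<Sum>i\<in>I. f i x)"
  by (induction I rule: finite_induct) (simp_all add: pf_const pf_add)

lemma pf_sum: "(\<And>i. i \<in> I \<Longrightarrow> pf (f i)) \<Longrightarrow> pf (\<lambda>x. \<Sum>i\<in>I. f i x)"
  by (cases "finite I") (simp_all add: pf_sum_fin pf_const)

lemma pf_prod_fin: "finite I \<Longrightarrow> (\<forall>i\<in>I. pf (f i)) \<longrightarrow> pf (\<lambda>x. \<Prod>i\<in>I. f i x)"
  by (induction I rule: finite_induct) (simp_all add: pf_const pf_mult)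

lemma pf_prod: "(\<And>i. i \<in> I \<Longrightarrow> pf (f i)) \<Longrightarrow> pf (\<lambda>x. \<Prod>i\<in>I. f i x)"
  by (cases "finite I") (simp_all add: pf_prod_fin pf_const)

lemma det_mat_expand:
  "det (mat n n f) = (\<Sum>p\<in>{p. p permutes {0..<n}}. signof p * (\<Prod>i = 0..<n. f (i, p i)))"
proof -
  have "det (mat n n f) = (\<Sum>p\<in>{p. p permutes {0..<n}}. signof p * (\<Prod>i = 0..<n. mat n n f $$ (i, p i)))"
    by (rule det_def') simp
  also have "\<dots> = (\<Sum>p\<in>{p. p permutes {0..<n}}. signof p * (\<Prod>i = 0..<n. f (i, p i)))"
  proof (rule sum.cong[OF refl])
    fix p assume "p \<in> {p. p permutes {0..<n}}"
    then have p: "p permutes {0..<n}" by simp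
    have "(\<Prod>i = 0..<n. mat n n f $$ (i, p i)) = (\<Prod>i = 0..<n. f (i, p i))"
    proof (rule prod.cong[OF refl])
      fix i assume i: "i \<in> {0..<n}"
      then have "p i \<in> {0..<n}" using permutes_in_image[OF p] by simp
      then show "mat n n f $$ (i, p i) = f (i, p i)" using i by simp
    qed
    then show "signof p * (\<Prod>i = 0..<n. mat n n f $$ (i, p i)) = signof p * (\<Prod>i = 0..<n. f (i, p i))"
      by simp
  qed
  finally show ?thesis .
qed

lemma pf_esym: "(\<And>i. pf (\<lambda>x. G x i)) \<Longrightarrow> pf (\<lambda>x. esym (G x) B r)"
  unfolding esym_def by (intro pf_sum pf_prod) auto

lemma pf_Delta: "(\<And>i. pf (\<lambda>x. G x i)) \<Longrightarrow> pf (\<lambda>x. Delta m l (esym (G x) B))"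
proof -
  assume G: "\<And>i. pf (\<lambda>x. G x i)"
  have c: "pf (\<lambda>x. cval m (esym (G x) B) r)" for r
    unfolding cval_def by (cases "r = 0"; cases "r < 0 \<or> int m < r") (simp_all add: pf_const pf_esym[OF G])
  show ?thesis
    unfolding Delta_def det_mat_expand
    by (intro pf_sum pf_mult pf_const pf_prod) (simp add: c)
qed



lemma vieta:
  assumes "finite B"
  shows "coeff (\<Prod>i\<in>B. [:g i, 1:]) j = (if j \<le> card B then esym g B (card B - j) else 0)"
  using assms
proof (induction B arbitrary: j rule: finite_induct)
  case empty
  then show ?case by (cases j) (simp_all add: esym_0)
next
  case (insert z B)
  let ?P = "\<Prod>i\<in>B. [:g i, 1:]"
  let ?n = "card B"
  have fI: "finite (insert z B)" using insert by simp
  have rem: "insert z B - {z} = B" using insert by auto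
  have pas: "esym g (insert z B) (Suc r) = esym g B (Suc r) + g z * esym g B r" for r
    using esym_pascal[OF fI, of z g r] rem by simp
  have cI: "card (insert z B) = Suc ?n" using insert by simp
  have "(\<Prod>i\<in>insert z B. [:g i, 1:]) = [:g z, 1:] * ?P" using insert by simp
  also have "\<dots> = smult (g z) ?P + pCons 0 ?P" by simp
  finally have eq: "coeff (\<Prod>i\<in>insert z B. [:g i, 1:]) j = g z * coeff ?P j + coeff (pCons 0 ?P) j"
    by simp
  show ?case
  proof (cases j)
    case 0
    then show ?thesis unfolding eq cI using insert.IH[of 0] pas[of ?n] esym_big[OF insert.hyps(1), where r = "Suc ?n" and g = g]
      by simp
  next
    case (Suc j')
    then have eq2: "coeff (\<Prod>i\<in>insert z B. [:g i, 1:]) j = g z * coeff ?P (Suc j') + coeff ?P j'"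
      unfolding eq by simp
    consider "Suc j' \<le> ?n" | "Suc j' = Suc ?n" | "Suc j' > Suc ?n" by linarith
    then show ?thesis
    proof cases
      case 1
      have e: "?n - j' = Suc (?n - Suc j')" using 1 by simp
      show ?thesis unfolding eq2 cI using 1 insert.IH[of j'] insert.IH[of "Suc j'"] pas[of "?n - Suc j'"] Suc e
        by (simp add: algebra_simps)
    next
      case 2
      then show ?thesis unfolding eq2 cI using insert.IH[of j'] insert.IH[of "Suc j'"] Suc fI
        by (simp add: esym_0 insert.hyps(1))
    next
      case 3
      then show ?thesis unfolding eq2 cI using insert.IH[of j'] insert.IH[of "Suc j'"] Suc by simp
    qed
  qed
qed

lemma monic_factor:
  "degree (p :: complex poly) = N \<Longrightarrow> lead_coeff p = 1 \<Longrightarrow> \<exists>g. p = (\<Prod>i\<in>{1..N}. [:g i, 1:])"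
proof (induction N arbitrary: p)
  case 0
  have "p = 1"
  proof (rule poly_eqI)
    fix n show "coeff p n = coeff 1 n"
      using 0 by (cases n) (auto intro: coeff_eq_0)
  qed
  then show ?case by simp
next
  case (Suc N)
  have "\<not> (\<exists>a l. a \<noteq> 0 \<and> l = 0 \<and> p = pCons a l)" using Suc.prems by auto
  then obtain z where z: "poly p z = 0" using fundamental_theorem_of_algebra_alt by blast
  then obtain q where q: "p = [:- z, 1:] * q" using poly_eq_0_iff_dvd by (metis dvdE)
  have q0: "q \<noteq> 0" using q Suc.prems by auto
  have d1: "degree p = degree [:- z, 1:] + degree q" unfolding q by (rule degree_mult_eq) (simp_all add: q0)
  have d2: "degree [:- z, 1:] = 1" by simp
  have dq: "degree q = N" using Suc.prems(1) d1 d2 by simp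
  have l1: "lead_coeff p = lead_coeff [:- z, 1:] * lead_coeff q" unfolding q by (rule lead_coeff_mult)
  have l2: "lead_coeff [:- z, 1:] = 1" by simp
  have lq: "lead_coeff q = 1" using Suc.prems(2) l1 l2 by simp
  obtain g where g: "q = (\<Prod>i\<in>{1..N}. [:g i, 1:])" using Suc.IH[OF dq lq] by blast
  define g' where "g' = g(Suc N := - z)"
  have "(\<Prod>i\<in>{1..Suc N}. [:g' i, 1:]) = [:g' (Suc N), 1:] * (\<Prod>i\<in>{1..N}. [:g' i, 1:])"
    by (simp add: atLeastAtMostSuc_conv)
  also have "(\<Prod>i\<in>{1..N}. [:g' i, 1:]) = q" unfolding g g'_def by (rule prod.cong) auto
  finally have "p = (\<Prod>i\<in>{1..Suc N}. [:g' i, 1:])" using q by (simp add: g'_def)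
  then show ?case by blast
qed

lemma esym_surj: "\<exists>g. \<forall>r\<in>{1..N}. esym g {1..N} r = c r"
proof -
  define c' where "c' r = (if r = 0 then 1 else c r)" for r
  define p :: "complex poly" where "p = (\<Sum>j\<in>{0..N}. monom (c' (N - j)) j)"
  have cp: "coeff p j = (if j \<le> N then c' (N - j) else 0)" for j
    unfolding p_def coeff_sum coeff_monom by (simp add: sum.delta)
  have dp: "degree p = N"
  proof (rule antisym)
    show "degree p \<le> N" by (rule degree_le) (simp add: cp)
    show "N \<le> degree p" by (rule le_degree) (simp add: cp c'_def)
  qed
  have lp: "lead_coeff p = 1" using dp cp by (simp add: c'_def)
  obtain g where g: "p = (\<Prod>i\<in>{1..N}. [:g i, 1:])" using monic_factor[OF dp lp] by blast
  have "esym g {1..N} r = c r" if r: "r \<in> {1..N}" for r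
  proof -
    have "coeff p (N - r) = esym g {1..N} r" unfolding g vieta[OF finite_atLeastAtMost] using r by simp
    moreover have "coeff p (N - r) = c r" unfolding cp using r by (simp add: c'_def)
    ultimately show ?thesis by simp
  qed
  then show ?thesis by blast
qed



lemma Delta_local:
  assumes "\<forall>r\<in>{1..m}. c r = c' r"
  shows "Delta m l c = Delta m l c'"
proof -
  have "cval m c r = cval m c' r" for r
  proof (cases "r = 0 \<or> r < 0 \<or> int m < r")
    case True then show ?thesis by (auto simp: cval_def)
  next
    case False
    then have "nat r \<in> {1..m}" by auto
    then show ?thesis using False assms by (auto simp: cval_def)
  qed
  then have "cval m c = cval m c'" by (rule ext)
  then show ?thesis unfolding Delta_def by simp
qed

lemma finite_box: "finite (box w m)"
proof (rule finite_subset)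
  show "box w m \<subseteq> {xs. set xs \<subseteq> {0..m} \<and> length xs = w}" unfolding box_def by auto
  show "finite {xs. set xs \<subseteq> {0..m} \<and> length xs = w}" by (rule finite_lists_length_eq) simp
qed

lemma kernel_distinct:
  assumes F0: "\<forall>c. (\<Sum>l\<in>box w m. of_int (d l) * Delta m l c) = 0"
    and f: "finite A" and c: "card A = Suc m" and inj: "inj_on g A"
  shows "(\<Sum>l\<in>box w m. of_int (d l) * Delta (Suc m) (map Suc l) (esym g A)) = 0"
proof -
  have cm: "card (A - {i}) = m" if "i \<in> A" for i using that f c by simp
  have "(\<Sum>l\<in>box w m. of_int (d l) * Delta (Suc m) (map Suc l) (esym g A))
      = (\<Sum>l\<in>box w m. of_int (d l) * (\<Sum>i\<in>A. g i ^ (w + m) / (\<Prod>j\<in>A - {i}. g i - g j) * Delta m l (esym g (A - {i}))))"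
  proof (rule sum.cong[OF refl])
    fix l assume l: "l \<in> box w m"
    then have lw: "length l = w" by (simp add: box_def)
    have "Delta (Suc m) (map Suc l) (esym g A) = Dn g A (map Suc l)"
      using Delta_esym[OF f, of "map Suc l" g] c by simp
    also have "\<dots> = (\<Sum>i\<in>A. g i ^ (w + m) / (\<Prod>j\<in>A - {i}. g i - g j) * Dn g (A - {i}) l)"
      using raise_step[OF f c inj, of l] lw by simp
    also have "\<dots> = (\<Sum>i\<in>A. g i ^ (w + m) / (\<Prod>j\<in>A - {i}. g i - g j) * Delta m l (esym g (A - {i})))"
    proof (rule sum.cong[OF refl])
      fix i assume i: "i \<in> A"
      have "Delta (card (A - {i})) l (esym g (A - {i})) = Dn g (A - {i}) l"
        using f by (intro Delta_esym) simp
      then show "g i ^ (w + m) / (\<Prod>j\<in>A - {i}. g i - g j) * Dn g (A - {i}) l =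
          g i ^ (w + m) / (\<Prod>j\<in>A - {i}. g i - g j) * Delta m l (esym g (A - {i}))"
        using cm[OF i] by simp
    qed
    finally show "of_int (d l) * Delta (Suc m) (map Suc l) (esym g A) =
        of_int (d l) * (\<Sum>i\<in>A. g i ^ (w + m) / (\<Prod>j\<in>A - {i}. g i - g j) * Delta m l (esym g (A - {i})))"
      by simp
  qed
  also have "\<dots> = (\<Sum>i\<in>A. g i ^ (w + m) / (\<Prod>j\<in>A - {i}. g i - g j) *
                      (\<Sum>l\<in>box w m. of_int (d l) * Delta m l (esym g (A - {i}))))"
    unfolding sum_distrib_left by (subst sum.swap) (simp add: algebra_simps)
  also have "\<dots> = 0" using F0 by simp
  finally show ?thesis .
qed

lemma kernel:
  assumes F0: "\<forall>c. (\<Sum>l\<in>box w m. of_int (d l) * Delta m l c) = 0"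
  shows "(\<Sum>l\<in>box w m. of_int (d l) * Delta (Suc m) (map Suc l) c) = 0"
proof -
  let ?N = "Suc m"
  have allg: "(\<Sum>l\<in>box w m. of_int (d l) * Delta ?N (map Suc l) (esym g {1..?N})) = 0" for g
  proof -
    define ge where "ge x i = g i + x * of_nat i" for x :: complex and i
    define G where "G x = (\<Sum>l\<in>box w m. of_int (d l) * Delta ?N (map Suc l) (esym (ge x) {1..?N}))" for x
    have pfge: "pf (\<lambda>x. ge x i)" for i
      unfolding ge_def by (intro pf_add pf_const pf_mult pf_id)
    have "pf G" unfolding G_def
      by (intro pf_sum pf_mult pf_const pf_Delta pfge)
    then obtain p where p: "\<And>x. G x = poly p x" unfolding pf_def by blast
    define Bad where "Bad = (\<lambda>(i,j). (g j - g i) / (of_nat i - of_nat j)) ` ({1..?N} \<times> {1..?N})"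
    have finBad: "finite Bad" unfolding Bad_def by simp
    have zero: "poly p x = 0" if x: "x \<notin> Bad" for x
    proof -
      have "inj_on (ge x) {1..?N}"
      proof (rule inj_onI)
        fix i j assume i: "i \<in> {1..?N}" and j: "j \<in> {1..?N}" and e: "ge x i = ge x j"
        show "i = j"
        proof (rule ccontr)
          assume ij: "i \<noteq> j"
          have nz: "(of_nat i - of_nat j :: complex) \<noteq> 0" using ij by simp
          have "x * (of_nat i - of_nat j) = g j - g i" using e unfolding ge_def by (simp add: algebra_simps)
          then have "x = (g j - g i) / (of_nat i - of_nat j)" using nz by (simp add: field_simps)
          then have "x \<in> Bad" unfolding Bad_def using i j by force
          then show False using x by simp
        qed
      qed
      then have "G x = 0" unfolding G_def by (intro kernel_distinct[OF F0]) auto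
      then show ?thesis using p by simp
    qed
    have "p = 0"
    proof (rule ccontr)
      assume "p \<noteq> 0"
      then have "finite {x. poly p x = 0}" by (rule poly_roots_finite)
      moreover have "UNIV - Bad \<subseteq> {x. poly p x = 0}" using zero by auto
      moreover have "infinite (UNIV - Bad :: complex set)"
        by (rule Diff_infinite_finite[OF finBad infinite_UNIV_char_0])
      ultimately show False using finite_subset by blast
    qed
    then have "G 0 = 0" using p by simp
    moreover have "ge 0 = g" unfolding ge_def by (rule ext) simp
    ultimately show ?thesis unfolding G_def by simp
  qed
  obtain g where g: "\<forall>r\<in>{1..?N}. esym g {1..?N} r = c r" using esym_surj by blast
  have "(\<Sum>l\<in>box w m. of_int (d l) * Delta ?N (map Suc l) c) =
        (\<Sum>l\<in>box w m. of_int (d l) * Delta ?N (map Suc l) (esym g {1..?N}))"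
    using Delta_local[of ?N c "esym g {1..?N}"] g by simp
  then show ?thesis using allg by simp
qed

lemma raise_op_eq:
  "raise_op m w (\<lambda>c. \<Sum>l\<in>box w m. of_int (a l) * Delta m l c) =
   (\<lambda>c. \<Sum>l\<in>box w m. of_int (a l) * Delta (Suc m) (map Suc l) c)"
  unfolding raise_op_def
proof (rule the_equality)
  show "\<exists>a'. (\<lambda>c. \<Sum>l\<in>box w m. of_int (a l) * Delta m l c) = (\<lambda>c. \<Sum>l\<in>box w m. of_int (a' l) * Delta m l c) \<and>
      (\<lambda>c. \<Sum>l\<in>box w m. of_int (a l) * Delta (Suc m) (map Suc l) c) =
      (\<lambda>c. \<Sum>l\<in>box w m. of_int (a' l) * Delta (Suc m) (map Suc l) c)" by blast
next
  fix q assume "\<exists>b. (\<lambda>c. \<Sum>l\<in>box w m. of_int (a l) * Delta m l c) = (\<lambda>c. \<Sum>l\<in>box w m. of_int (b l) * Delta m l c) \<and>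
      q = (\<lambda>c. \<Sum>l\<in>box w m. of_int (b l) * Delta (Suc m) (map Suc l) c)"
  then obtain b where b1: "(\<lambda>c. \<Sum>l\<in>box w m. of_int (a l) * Delta m l c) = (\<lambda>c. \<Sum>l\<in>box w m. of_int (b l) * Delta m l c)"
    and b2: "q = (\<lambda>c. \<Sum>l\<in>box w m. of_int (b l) * Delta (Suc m) (map Suc l) c)" by blast
  have F0: "\<forall>c. (\<Sum>l\<in>box w m. of_int (a l - b l) * Delta m l c) = 0"
  proof
    fix c
    have "(\<Sum>l\<in>box w m. of_int (a l) * Delta m l c) = (\<Sum>l\<in>box w m. of_int (b l) * Delta m l c)"
      using fun_cong[OF b1, of c] by simp
    then show "(\<Sum>l\<in>box w m. of_int (a l - b l) * Delta m l c) = 0"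
      by (simp add: left_diff_distrib sum_subtractf)
  qed
  show "q = (\<lambda>c. \<Sum>l\<in>box w m. of_int (a l) * Delta (Suc m) (map Suc l) c)"
    unfolding b2
  proof (rule ext)
    fix c
    have "(\<Sum>l\<in>box w m. of_int (a l - b l) * Delta (Suc m) (map Suc l) c) = 0" by (rule kernel[OF F0])
    then show "(\<Sum>l\<in>box w m. of_int (b l) * Delta (Suc m) (map Suc l) c) =
        (\<Sum>l\<in>box w m. of_int (a l) * Delta (Suc m) (map Suc l) c)"
      by (simp add: left_diff_distrib sum_subtractf)
  qed
qed



lemma Delta_as_sum:
  assumes L: "L \<in> box w m"
  shows "Delta m L = (\<lambda>c. \<Sum>l\<in>box w m. of_int (if l = L then 1 else 0) * Delta m l c)"
proof (rule ext)
  fix c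
  have "(\<Sum>l\<in>box w m. of_int (if l = L then 1 else 0) * Delta m l c) = (\<Sum>l\<in>box w m. if l = L then Delta m l c else 0)"
    by (rule sum.cong) auto
  then show "Delta m L c = (\<Sum>l\<in>box w m. of_int (if l = L then 1 else 0) * Delta m l c)"
    using L by (simp add: finite_box)
qed

lemma raise_iter_box:
  assumes len: "length lam = w" and sorted: "sorted_wrt (\<ge>) lam" and le: "\<forall>x\<in>set lam. x \<le> s"
  shows "raise_iter w s t (Delta s lam) = Delta (s + t) (map (\<lambda>x. x + t) lam)"
proof (induction t)
  case 0 then show ?case by simp
next
  case (Suc t)
  define L where "L = map (\<lambda>x. x + t) lam"
  have L: "L \<in> box w (s + t)"
    unfolding box_def L_def using len le sorted by (auto simp: sorted_wrt_map)
  have "raise_iter w s (Suc t) (Delta s lam) = raise_op (s + t) w (Delta (s + t) L)"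
    using Suc.IH L_def by simp
  also have "\<dots> = (\<lambda>c. \<Sum>l\<in>box w (s + t). of_int (if l = L then 1 else 0) * Delta (Suc (s + t)) (map Suc l) c)"
    unfolding Delta_as_sum[OF L] by (rule raise_op_eq)
  also have "\<dots> = Delta (Suc (s + t)) (map Suc L)"
  proof (rule ext)
    fix c
    have "(\<Sum>l\<in>box w (s + t). of_int (if l = L then 1 else 0) * Delta (Suc (s + t)) (map Suc l) c)
       = (\<Sum>l\<in>box w (s + t). if l = L then Delta (Suc (s + t)) (map Suc l) c else 0)"
      by (rule sum.cong) auto
    then show "(\<Sum>l\<in>box w (s + t). of_int (if l = L then 1 else 0) * Delta (Suc (s + t)) (map Suc l) c)
       = Delta (Suc (s + t)) (map Suc L) c"
      using L by (simp add: finite_box)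
  qed
  also have "\<dots> = Delta (s + Suc t) (map (\<lambda>x. x + Suc t) lam)" unfolding L_def by (simp add: comp_def)
  finally show ?case .
qed

lemma raise_iter_zero: "raise_iter w s t (\<lambda>c. 0) = (\<lambda>c. 0)"
proof (induction t)
  case 0 then show ?case by simp
next
  case (Suc t)
  have z: "(\<lambda>c::nat \<Rightarrow> complex. 0::complex) = (\<lambda>c. \<Sum>l\<in>box w (s + t). of_int ((\<lambda>_. 0) l) * Delta (s + t) l c)"
    by simp
  have "raise_op (s + t) w (\<lambda>c. 0) = (\<lambda>c. \<Sum>l\<in>box w (s + t). of_int ((\<lambda>_. 0) l) * Delta (Suc (s + t)) (map Suc l) c)"
    by (subst z) (rule raise_op_eq)
  then show ?case using Suc.IH by simp
qed

lemma Delta_big_zero: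
  assumes "lam \<noteq> []" "s < lam ! 0"
  shows "Delta s lam c = 0"
proof -
  have z: "(\<Prod>i = 0..<length lam. cval s c (int (lam ! i) + int (p i) - int i)) = 0" for p
  proof -
    have "cval s c (int (lam ! 0) + int (p 0) - int 0) = 0" using assms by (simp add: cval_def)
    moreover have "(0::nat) \<in> {0..<length lam}" using assms by simp
    ultimately show ?thesis by (intro prod_zero) (auto intro: bexI[of _ 0])
  qed
  show ?thesis unfolding Delta_def det_mat_expand by (simp add: z)
qed

theorem mainTheorem6:
  fixes n k s :: nat and lam :: "nat list" and \<gamma> :: "nat \<Rightarrow> complex"
  assumes "s \<le> n" and "s \<le> k"
    and "length lam = k - s" and "sorted_wrt (\<ge>) lam"
    and "inj_on \<gamma> {1..n}"
  shows "raise_iter (k - s) s (n - s) (Delta s lam) (esym \<gamma> {1..n}) =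
    (\<Sum>S | S \<subseteq> {1..n} \<and> card S = s.
       Delta s lam (esym \<gamma> S) * (\<Prod>i\<in>{1..n} - S. \<gamma> i ^ k)
       / (\<Prod>i\<in>{1..n} - S. \<Prod>j\<in>S. \<gamma> i - \<gamma> j))"
proof (cases "\<forall>x\<in>set lam. x \<le> s")
  case True
  have k: "k = length lam + s" using assms by simp
  have "raise_iter (k - s) s (n - s) (Delta s lam) (esym \<gamma> {1..n}) =
        Delta (s + (n - s)) (map (\<lambda>x. x + (n - s)) lam) (esym \<gamma> {1..n})"
    using raise_iter_box[OF assms(3) assms(4) True] by simp
  also have "\<dots> = Dn \<gamma> {1..n} (map (\<lambda>x. x + (n - s)) lam)"
    using Delta_esym[of "{1..n}" "map (\<lambda>x. x + (n - s)) lam" \<gamma>] assms(1) by simp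
  also have "\<dots> = (\<Sum>S | S \<subseteq> {1..n} \<and> card S = s.
       Dn \<gamma> S lam * (\<Prod>i\<in>{1..n} - S. \<gamma> i ^ k) / (\<Prod>i\<in>{1..n} - S. \<Prod>j\<in>S. \<gamma> i - \<gamma> j))"
    by (rule main_formula[OF k]) (use assms in auto)
  also have "\<dots> = (\<Sum>S | S \<subseteq> {1..n} \<and> card S = s.
       Delta s lam (esym \<gamma> S) * (\<Prod>i\<in>{1..n} - S. \<gamma> i ^ k) / (\<Prod>i\<in>{1..n} - S. \<Prod>j\<in>S. \<gamma> i - \<gamma> j))"
  proof (rule sum.cong[OF refl])
    fix S assume S: "S \<in> {S. S \<subseteq> {1..n} \<and> card S = s}"
    then have fS: "finite S" by (auto dest: finite_subset)
    have "Delta s lam (esym \<gamma> S) = Dn \<gamma> S lam" using Delta_esym[OF fS, of lam \<gamma>] S by simp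
    then show "Dn \<gamma> S lam * (\<Prod>i\<in>{1..n} - S. \<gamma> i ^ k) / (\<Prod>i\<in>{1..n} - S. \<Prod>j\<in>S. \<gamma> i - \<gamma> j) =
        Delta s lam (esym \<gamma> S) * (\<Prod>i\<in>{1..n} - S. \<gamma> i ^ k) / (\<Prod>i\<in>{1..n} - S. \<Prod>j\<in>S. \<gamma> i - \<gamma> j)"
      by simp
  qed
  finally show ?thesis .
next
  case False
  then obtain x where x: "x \<in> set lam" "s < x" by auto
  then obtain a rest where lam: "lam = a # rest" by (cases lam) auto
  have "x \<le> a" using assms(4) x unfolding lam by auto
  then have big: "lam \<noteq> []" "s < lam ! 0" using x lam by auto
  have D0: "Delta s lam = (\<lambda>c. 0)" by (rule ext) (rule Delta_big_zero[OF big])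
  show ?thesis unfolding D0 raise_iter_zero by simp
qed


end
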